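(* $\mathrm{UF}_1^=$ and $\mathrm{FOC}^2$ are incomparable in expressivity: neither $\mathrm{UF}_1^=\leq\mathrm{FOC}^2$ nor $\mathrm{FOC}^2\leq\mathrm{UF}_1^=$ holds.
   Context: Vocabularies are relational (relation symbols of positive finite arities, no constants or function symbols). A $k$-ary $\tau$-atom is an atomic formula (a relational atom $R(z_1,\dots,z_m)$ with $R\in\tau$, or an equality $z=z'$) having exactly $k$ distinct free variables. For a finite set $V$ of variables, a $V$-uniform set is a finite set of relational (non-equality) $\tau$-atoms $R(z_1,\dots,z_m)$ with $\{z_1,\dots,z_m\}=V$. The set $\mathrm{UF}_1^=(\tau)$ is the smallest set $\mathcal F$ such that: (1) every unary $\tau$-atom, and $\bot,\top$, are in $\mathcal F$; (2) every equality $x=y$ is in $\mathcal F$; (3) $\mathcal F$ is closed under $\neg$ and $\wedge$; (4) if $X=\{x_0,\dots,x_k\}$ is a finite set of variables, $U$ a finite set of formulas of $\mathcal F$ with free variables in $X$, $V\subseteq X$, $F$ a $V$-uniform set of $\tau$-atoms, and $\varphi$ a Boolean combination of formulas in $U\cup F$, then $\exists x_1\dots\exists x_k\,\varphi\in\mathcal F$ and $\exists x_0\dots\exists x_k\,\varphi\in\mathcal F$. $\mathrm{UF}_1^=$ is the union of $\mathrm{UF}_1^=(\tau)$ over all vocabularies; $\forall$ and other connectives are abbreviations. $\mathrm{FOC}^2$ is the two-variable fragment of first-order logic with equality extended by counting quantifiers $\exists^{\geq k}$ ($k$ a positive integer): formulas built using only two variable symbols. For fragments $\mathcal L,\mathcal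 L'$ of first-order logic, $\mathcal L\leq\mathcal L'$ means that every sentence of $\mathcal L$ is equivalent to some sentence of $\mathcal L'$. *)

theory Defs
  imports Main
begin

text \<open>A relation symbol is a pair (name, arity);
  a vocabulary is a set of relation symbols of positive arity.
  ExGe k x phi is the counting quantifier "there exist at least k elements x with phi";
  the ordinary existential quantifier is ExGe 1.\<close>

type_synonym rsym = "nat \<times> nat"

datatype fm =
    Bot
  | Top
  | Rel rsym "nat list"
  | Eq nat nat
  | Neg fm
  | Conj fm fm
  | ExGe nat nat fm

abbreviation Ex1q :: "nat \<Rightarrow> fm \<Rightarrow> fm" where
  "Ex1q x \<phi> \<equiv> ExGe 1 x \<phi>"

definition exs :: "nat list \<Rightarrow> fm \<Rightarrow> fm" where
  "exs xs \<phi> = foldr Ex1q xs \<phi>"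

fun fv :: "fm \<Rightarrow> nat set" where
  "fv Bot = {}"
| "fv Top = {}"
| "fv (Rel R zs) = set zs"
| "fv (Eq x y) = {x, y}"
| "fv (Neg \<phi>) = fv \<phi>"
| "fv (Conj \<phi> \<psi>) = fv \<phi> \<union> fv \<psi>"
| "fv (ExGe k x \<phi>) = fv \<phi> - {x}"

fun vars :: "fm \<Rightarrow> nat set" where
  "vars Bot = {}"
| "vars Top = {}"
| "vars (Rel R zs) = set zs"
| "vars (Eq x y) = {x, y}"
| "vars (Neg \<phi>) = vars \<phi>"
| "vars (Conj \<phi> \<psi>) = vars \<phi> \<union> vars \<psi>"
| "vars (ExGe k x \<phi>) = insert x (vars \<phi>)"

fun wf :: "fm \<Rightarrow> bool" where
  "wf Bot = True"
| "wf Top = True"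
| "wf (Rel R zs) = (snd R > 0 \<and> length zs = snd R)"
| "wf (Eq x y) = True"
| "wf (Neg \<phi>) = wf \<phi>"
| "wf (Conj \<phi> \<psi>) = (wf \<phi> \<and> wf \<psi>)"
| "wf (ExGe k x \<phi>) = wf \<phi>"

fun pos_counts :: "fm \<Rightarrow> bool" where
  "pos_counts (Neg \<phi>) = pos_counts \<phi>"
| "pos_counts (Conj \<phi> \<psi>) = (pos_counts \<phi> \<and> pos_counts \<psi>)"
| "pos_counts (ExGe k x \<phi>) = (k > 0 \<and> pos_counts \<phi>)"
| "pos_counts _ = True"

fun sat :: "'a set \<Rightarrow> (rsym \<Rightarrow> 'a list \<Rightarrow> bool) \<Rightarrow> (nat \<Rightarrow> 'a) \<Rightarrow> fm \<Rightarrow> bool" where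
  "sat D I e Bot = False"
| "sat D I e Top = True"
| "sat D I e (Rel R zs) = I R (map e zs)"
| "sat D I e (Eq x y) = (e x = e y)"
| "sat D I e (Neg \<phi>) = (\<not> sat D I e \<phi>)"
| "sat D I e (Conj \<phi> \<psi>) = (sat D I e \<phi> \<and> sat D I e \<psi>)"
| "sat D I e (ExGe k x \<phi>) =
     (\<exists>S. S \<subseteq> D \<and> finite S \<and> card S = k \<and> (\<forall>d\<in>S. sat D I (e(x := d)) \<phi>))"

text \<open>Domains are taken to be subsets of nat, i.e. all countable structures; by the downward
  Loewenheim-Skolem theorem this coincides with equivalence over all structures.\<close>
definition equiv_fm :: "fm \<Rightarrow> fm \<Rightarrow> bool" where
  "equiv_fm \<phi> \<psi> \<longleftrightarrow>
     (\<forall>(D::nat set) I e. D \<noteq> {} \<longrightarrow> (\<forall>v. e v \<in> D) \<longrightarrow> (sat D I e \<phi> \<longleftrightarrow> sat D I e \<psi>))"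

definition leq_logic :: "(fm \<Rightarrow> bool) \<Rightarrow> (fm \<Rightarrow> bool) \<Rightarrow> bool" where
  "leq_logic L L' \<longleftrightarrow> (\<forall>\<phi>. L \<phi> \<longrightarrow> (\<exists>\<psi>. L' \<psi> \<and> equiv_fm \<phi> \<psi>))"

inductive bool_comb :: "fm set \<Rightarrow> fm \<Rightarrow> bool" for S where
  base: "\<phi> \<in> S \<Longrightarrow> bool_comb S \<phi>"
| neg: "bool_comb S \<phi> \<Longrightarrow> bool_comb S (Neg \<phi>)"
| conj: "bool_comb S \<phi> \<Longrightarrow> bool_comb S \<psi> \<Longrightarrow> bool_comb S (Conj \<phi> \<psi>)"

definition tau_rel_atom :: "rsym set \<Rightarrow> fm \<Rightarrow> bool" where
  "tau_rel_atom \<tau> a \<longleftrightarrow> (\<exists>R zs. a = Rel R zs \<and> R \<in> \<tau> \<and> length zs = snd R)"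

definition uniform_set :: "rsym set \<Rightarrow> nat set \<Rightarrow> fm set \<Rightarrow> bool" where
  "uniform_set \<tau> V F \<longleftrightarrow> finite F \<and> (\<forall>a\<in>F. tau_rel_atom \<tau> a \<and> fv a = V)"

inductive uf1 :: "rsym set \<Rightarrow> fm \<Rightarrow> bool" for \<tau> where
  unary_rel: "R \<in> \<tau> \<Longrightarrow> length zs = snd R \<Longrightarrow> card (set zs) = 1 \<Longrightarrow> uf1 \<tau> (Rel R zs)"
| bot: "uf1 \<tau> Bot"
| top: "uf1 \<tau> Top"
| eq: "uf1 \<tau> (Eq x y)"
| neg: "uf1 \<tau> \<phi> \<Longrightarrow> uf1 \<tau> (Neg \<phi>)"
| conj: "uf1 \<tau> \<phi> \<Longrightarrow> uf1 \<tau> \<psi> \<Longrightarrow> uf1 \<tau> (Conj \<phi> \<psi>)"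
| ex_rest: "distinct (x0 # xs) \<Longrightarrow> finite U \<Longrightarrow>
      (\<forall>u\<in>U. uf1 \<tau> u \<and> fv u \<subseteq> set (x0 # xs)) \<Longrightarrow>
      V \<subseteq> set (x0 # xs) \<Longrightarrow> uniform_set \<tau> V F \<Longrightarrow> bool_comb (U \<union> F) \<phi> \<Longrightarrow>
      uf1 \<tau> (exs xs \<phi>)"
| ex_all: "distinct (x0 # xs) \<Longrightarrow> finite U \<Longrightarrow>
      (\<forall>u\<in>U. uf1 \<tau> u \<and> fv u \<subseteq> set (x0 # xs)) \<Longrightarrow>
      V \<subseteq> set (x0 # xs) \<Longrightarrow> uniform_set \<tau> V F \<Longrightarrow> bool_comb (U \<union> F) \<phi> \<Longrightarrow>
      uf1 \<tau> (exs (x0 # xs) \<phi>)"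

definition UF1_sentence :: "fm \<Rightarrow> bool" where
  "UF1_sentence \<phi> \<longleftrightarrow>
     (\<exists>\<tau>. (\<forall>R\<in>\<tau>. snd R > 0) \<and> uf1 \<tau> \<phi>) \<and> fv \<phi> = {}"

definition FOC2_sentence :: "fm \<Rightarrow> bool" where
  "FOC2_sentence \<phi> \<longleftrightarrow> wf \<phi> \<and> pos_counts \<phi> \<and> vars \<phi> \<subseteq> {0, 1} \<and> fv \<phi> = {}"

end

theory Submission
  imports Defs
begin

lemma sat_ex1: "sat D I e (ExGe 1 x \<phi>) = (\<exists>d\<in>D. sat D I (e(x:=d)) \<phi>)"
  by (auto simp: card_1_singleton_iff)

lemma sat_exs: "sat UNIV I e (exs xs \<phi>) = (\<exists>e'. (\<forall>v. v \<notin> set xs \<longrightarrow> e' v = e v) \<and> sat UNIV I e' \<phi>)"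
proof (induction xs arbitrary: e)
  case Nil then show ?case by (auto simp: exs_def)
next
  case (Cons x xs)
  have "sat UNIV I e (exs (x#xs) \<phi>) = (\<exists>d. sat UNIV I (e(x:=d)) (exs xs \<phi>))"
    unfolding exs_def foldr.simps o_apply by (subst sat_ex1) simp
  also have "\<dots> = (\<exists>e'. (\<forall>v. v \<notin> set (x#xs) \<longrightarrow> e' v = e v) \<and> sat UNIV I e' \<phi>)"
    unfolding Cons.IH
  proof
    assume "\<exists>d e'. (\<forall>v. v \<notin> set xs \<longrightarrow> e' v = (e(x := d)) v) \<and> sat UNIV I e' \<phi>"
    then obtain d e' where "\<forall>v. v \<notin> set xs \<longrightarrow> e' v = (e(x := d)) v" "sat UNIV I e' \<phi>" by blast
    then show "\<exists>e'. (\<forall>v. v \<notin> set (x#xs) \<longrightarrow> e' v = e v) \<and> sat UNIV I e' \<phi>"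
      by (intro exI[of _ e']) auto
  next
    assume "\<exists>e'. (\<forall>v. v \<notin> set (x#xs) \<longrightarrow> e' v = e v) \<and> sat UNIV I e' \<phi>"
    then obtain e' where "\<forall>v. v \<notin> set (x#xs) \<longrightarrow> e' v = e v" "sat UNIV I e' \<phi>" by blast
    then show "\<exists>d e'. (\<forall>v. v \<notin> set xs \<longrightarrow> e' v = (e(x := d)) v) \<and> sat UNIV I e' \<phi>"
      by (intro exI[of _ "e' x"] exI[of _ e']) auto
  qed
  finally show ?case .
qed

lemma foc2_inv:
  assumes "vars \<phi> \<subseteq> {0,1}" "\<And>R l. card (set l) \<le> 2 \<Longrightarrow> I1 R l = I2 R l"
  shows "sat D I1 e \<phi> = sat D I2 e \<phi>"
  using assms(1)
proof (induction \<phi> arbitrary: e)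
  case (Rel R zs)
  have "set (map e zs) \<subseteq> e ` {0,1}" using Rel by auto
  hence "card (set (map e zs)) \<le> card (e ` {0,1})" by (intro card_mono) auto
  also have "\<dots> \<le> 2" by (rule order_trans[OF card_image_le]) auto
  finally show ?case using assms(2) by simp
qed auto

definition adj :: "nat \<Rightarrow> nat \<Rightarrow> nat \<Rightarrow> bool" where
  "adj k a b = (a div k = b div k \<and> a \<noteq> b)"

definition IK :: "nat \<Rightarrow> rsym \<Rightarrow> nat list \<Rightarrow> bool" where
  "IK k R l = (R = (0,2) \<and> (case l of [a,b] \<Rightarrow> adj k a b | _ \<Rightarrow> False))"

lemma adj_sym: "adj k a b = adj k b a" by (auto simp: adj_def)

lemma divh1: "2 \<le> (k::nat) \<Longrightarrow> (k*m + 1) div k = m"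
proof -
  assume a: "2 \<le> k"
  have "(1 + k*m) div k = 1 div k + m" using a by (subst div_mult_self2) auto
  thus ?thesis using a by (simp add: add.commute)
qed

lemma divh2: "2 \<le> (k::nat) \<Longrightarrow> (k*m + k) div k = m + 1"
  using div_add_self2[of k "k*m"] by simp

lemma choose_pair:
  assumes "k2 \<ge> 2" "p \<noteq> q"
  shows "\<exists>cp cq. cp \<noteq> cq \<and> (adj k2 cp cq \<longleftrightarrow> adj k1 p q) \<and> (r = p \<longrightarrow> cp = b0) \<and> (r = q \<longrightarrow> cq = b0)
     \<and> (r \<noteq> p \<and> r \<noteq> q \<longrightarrow> b0 \<noteq> cp \<and> b0 \<noteq> cq)"
proof -
  define nb where "nb = (if b0 mod k2 = 0 then b0 + 1 else b0 - 1)"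
  have nb1: "adj k2 b0 nb"
  proof (cases "b0 mod k2 = 0")
    case True
    then obtain m where m: "b0 = k2 * m" by auto
    have "(1 + k2*m) div k2 = 1 div k2 + m" using assms(1) by (subst div_mult_self2) auto
    hence "(k2*m + 1) div k2 = m" using assms(1) by (simp add: add.commute)
    then show ?thesis using True m assms by (auto simp: adj_def nb_def)
  next
    case False
    define m where "m = b0 div k2"
    define j where "j = b0 mod k2"
    have mj: "b0 = k2*m + j" "j < k2" "j > 0" using False assms(1) unfolding m_def j_def by auto
    have e1: "b0 - 1 = (j - 1) + k2*m" using mj by simp
    have "(b0 - 1) div k2 = m" unfolding e1 using mj assms(1) by (subst div_mult_self2) auto
    moreover have "b0 div k2 = m" using m_def by simp
    ultimately show ?thesis using False mj by (auto simp: adj_def nb_def)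
  qed
  have "(b0 + k2) div k2 = b0 div k2 + 1" using assms(1) div_add_self2[of k2 b0] by simp
  hence far: "\<not> adj k2 b0 (b0 + k2)" "b0 + k2 \<noteq> b0" using assms(1) by (auto simp: adj_def)
  define M where "M = b0 + 1"
  have M1: "adj k2 (k2*M) (k2*M+1)" using assms(1) divh1[of k2 M] by (auto simp: adj_def)
  have M2: "\<not> adj k2 (k2*M) (k2*M+k2)" "k2*M \<noteq> k2*M+k2" using assms(1) divh2[of k2 M] by (auto simp: adj_def)
  have Mb: "b0 < k2*M" using assms(1) unfolding M_def
    by (metis add.commute less_add_one mult_le_mono1 nat_mult_1 le_trans less_le_trans one_le_numeral less_le not_less_eq_eq Suc_eq_plus1 mult_le_cancel2 nat_less_le)
  show ?thesis
  proof (cases "r = p")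
    case True
    show ?thesis
      by (rule exI[of _ b0], rule exI[of _ "if adj k1 p q then nb else b0 + k2"])
         (use True assms nb1 far in \<open>auto simp: adj_def\<close>)
  next
    case F1: False
    show ?thesis
    proof (cases "r = q")
      case True
      show ?thesis
        by (rule exI[of _ "if adj k1 p q then nb else b0 + k2"], rule exI[of _ b0])
           (use True F1 assms nb1 far in \<open>auto simp: adj_def\<close>)
    next
      case False
      show ?thesis
        by (rule exI[of _ "k2*M"], rule exI[of _ "if adj k1 p q then k2*M+1 else k2*M+k2"])
           (use False F1 M1 M2 Mb in auto)
    qed
  qed
qed

lemma g_inj_aux:
  fixes r p q b0 cp cq N x y :: nat
  assumes h: "(if x = r then b0 else if x = p then cp else if x = q then cq else N + x) = (if y = r then b0 else if y = p then cp else if y = q then cq else N + y)"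
  and N: "N = b0 + cp + cq + 1" and c: "cp \<noteq> cq" "(r = p \<longrightarrow> cp = b0)" "(r = q \<longrightarrow> cq = b0)"
     "(r \<noteq> p \<and> r \<noteq> q \<longrightarrow> b0 \<noteq> cp \<and> b0 \<noteq> cq)" and F: "p \<noteq> q"
  shows "x = y"
proof -
  have A: "N + x \<noteq> b0" "N + x \<noteq> cp" "N + x \<noteq> cq" for x using N by auto
  show ?thesis
  proof (cases "x = r")
    case xr: True
    show ?thesis
    proof (rule ccontr)
      assume "x \<noteq> y"
      then have "y \<noteq> r" using xr by simp
      then show False using h xr c F A[of y] by (auto split: if_splits)
    qed
  next
    case xr: False
    show ?thesis
    proof (cases "y = r")
      case True
      then show ?thesis using h xr c F A[of x] by (auto split: if_splits)
    next
      case yr: False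
      then show ?thesis using h xr c F A[of x] A[of y] by (auto split: if_splits)
    qed
  qed
qed

lemma choose_g:
  fixes r b0 p q :: nat
  assumes "k2 \<ge> 2"
  shows "\<exists>g. inj g \<and> g r = b0 \<and> (adj k2 (g p) (g q) \<longleftrightarrow> adj k1 p q)"
proof (cases "p = q")
  case True
  define g where "g = (\<lambda>w. if w = r then b0 else b0 + 1 + w)"
  have "inj g"
  proof (rule injI)
    fix x y assume h: "g x = g y"
    have h': "(if x = r then b0 else b0 + 1 + x) = (if y = r then b0 else b0 + 1 + y)"
      using h unfolding g_def .
    show "x = y"
    proof (cases "x = r")
      case True
      then show ?thesis using h' by (cases "y = r") auto
    next
      case False
      then show ?thesis using h' by (cases "y = r") auto
    qed
  qed
  moreover have "\<not> adj k2 (g p) (g q)" "\<not> adj k1 p q" using True by (auto simp: adj_def)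
  moreover have "g r = b0" by (simp add: g_def)
  ultimately show ?thesis by blast
next
  case False
  obtain cp cq where c: "cp \<noteq> cq" "(adj k2 cp cq \<longleftrightarrow> adj k1 p q)" "(r = p \<longrightarrow> cp = b0)" "(r = q \<longrightarrow> cq = b0)"
     "(r \<noteq> p \<and> r \<noteq> q \<longrightarrow> b0 \<noteq> cp \<and> b0 \<noteq> cq)"
    using choose_pair[OF assms False, of k1 r b0] by (elim exE conjE) (rule that)
  define N where "N = b0 + cp + cq + 1"
  define g where "g = (\<lambda>w. if w = r then b0 else if w = p then cp else if w = q then cq else N + w)"
  have "inj g"
  proof (rule injI)
    fix x y assume h: "g x = g y"
    have h': "(if x = r then b0 else if x = p then cp else if x = q then cq else N + x) = (if y = r then b0 else if y = p then cp else if y = q then cq else N + y)"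
      using h unfolding g_def .
    show "x = y" by (rule g_inj_aux[OF h' N_def c(1) c(3) c(4) c(5) False])
  qed
  moreover have "g p = cp" "g q = cq" using c(3) c(4) False by (auto simp: g_def)
  moreover have "g r = b0" by (simp add: g_def)
  ultimately show ?thesis using c(2) by metis
qed

lemma bool_comb_sat:
  "bool_comb S \<phi> \<Longrightarrow> \<forall>s\<in>S. sat D I1 e1 s = sat D I2 e2 s \<Longrightarrow> sat D I1 e1 \<phi> = sat D I2 e2 \<phi>"
  by (induction rule: bool_comb.induct) auto

lemma IK_trans:
  assumes "inj g" "\<And>a b. l = [a,b] \<Longrightarrow> a \<noteq> b \<Longrightarrow> adj k2 (g a) (g b) = adj k1 a b"
  shows "IK k2 R (map g l) = IK k1 R l"
proof (cases "\<exists>a b. l = [a,b]")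
  case True
  then obtain a b where l: "l = [a,b]" by blast
  show ?thesis
  proof (cases "a = b")
    case True then show ?thesis using l by (simp add: IK_def adj_def)
  next
    case False
    then have "g a \<noteq> g b" using assms(1) by (meson injD)
    then show ?thesis using l assms(2)[OF l False] by (simp add: IK_def)
  qed
next
  case False
  then have "(case map g l of [a,b] \<Rightarrow> adj k2 a b | _ \<Rightarrow> False) = False"
            "(case l of [a,b] \<Rightarrow> adj k1 a b | _ \<Rightarrow> False) = False"
    by (auto split: list.split)
  then show ?thesis by (simp add: IK_def)
qed

definition pat :: "nat set \<Rightarrow> (nat \<Rightarrow> nat) \<Rightarrow> (nat \<Rightarrow> nat) \<Rightarrow> bool" where
  "pat A e1 e2 = (\<forall>x\<in>A. \<forall>y\<in>A. (e1 x = e1 y) = (e2 x = e2 y))"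

lemma block_dir:
  assumes k2: "k2 \<ge> 2"
  and U: "\<forall>u\<in>U. fv u \<subseteq> insert x0 (set xs) \<and> (\<forall>e1 e2. pat (fv u) e1 e2 \<longrightarrow> sat UNIV (IK k1) e1 u = sat UNIV (IK k2) e2 u)"
  and V: "V \<subseteq> insert x0 (set xs)" and F: "uniform_set \<tau> V F"
  and B: "bool_comb (U \<union> F) \<phi>"
  and S: "sat UNIV (IK k1) e1 (exs xs \<phi>)"
  shows "sat UNIV (IK k2) e2 (exs xs \<phi>)"
proof -
  obtain e1' where e1': "\<forall>v. v \<notin> set xs \<longrightarrow> e1' v = e1 v" "sat UNIV (IK k1) e1' \<phi>"
    using S sat_exs by blast
  obtain p q where pq: "e1' ` V = {p,q} \<or> card (e1' ` V) \<noteq> 2"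
    by (metis card_2_iff)
  obtain g where g: "inj g" "g (e1' x0) = e2 x0" "adj k2 (g p) (g q) = adj k1 p q"
    using choose_g[OF k2] by blast
  define e2' where "e2' = (\<lambda>v. if v \<in> set xs then g (e1' v) else e2 v)"
  have X: "\<forall>v\<in>insert x0 (set xs). e2' v = g (e1' v)" using g e1' by (auto simp: e2'_def)
  have agree: "\<forall>v. v\<notin>set xs \<longrightarrow> e2' v = e2 v" by (auto simp: e2'_def)
  have "\<forall>s\<in>U\<union>F. sat UNIV (IK k1) e1' s = sat UNIV (IK k2) e2' s"
  proof
    fix s assume s: "s \<in> U \<union> F"
    show "sat UNIV (IK k1) e1' s = sat UNIV (IK k2) e2' s"
    proof (cases "s \<in> U")
      case True
      then have fu: "fv s \<subseteq> insert x0 (set xs)" and IH: "\<forall>e1 e2. pat (fv s) e1 e2 \<longrightarrow> sat UNIV (IK k1) e1 s = sat UNIV (IK k2) e2 s"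
        using U by auto
      have "pat (fv s) e1' e2'" unfolding pat_def
      proof (intro ballI)
        fix x y assume "x \<in> fv s" "y \<in> fv s"
        then have "e2' x = g (e1' x)" "e2' y = g (e1' y)" using X fu by auto
        then show "(e1' x = e1' y) = (e2' x = e2' y)" by (simp add: inj_eq[OF g(1)])
      qed
      then show ?thesis using IH by blast
    next
      case False
      then have "s \<in> F" using s by blast
      then obtain R zs where a: "s = Rel R zs" "set zs = V"
        using F unfolding uniform_set_def tau_rel_atom_def by force
      have m: "map e2' zs = map (g \<circ> e1') zs" using X V a(2) by (auto intro: map_cong)
      have IKe: "IK k2 R (map g (map e1' zs)) = IK k1 R (map e1' zs)"
      proof (rule IK_trans[OF g(1)])
        fix a b assume ab: "map e1' zs = [a,b]" "a \<noteq> b"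
        have "e1' ` V = {a,b}" using ab a(2) by (metis list.set(1) list.set(2) set_map)
        hence "card (e1' ` V) = 2" using ab(2) by simp
        hence "{a,b} = {p,q}" using pq \<open>e1' ` V = {a,b}\<close> by auto
        then show "adj k2 (g a) (g b) = adj k1 a b" using g(3) adj_sym
          by (metis doubleton_eq_iff)
      qed
      then show ?thesis using a m by (simp del: map_map add: map_map[symmetric])
    qed
  qed
  then have "sat UNIV (IK k1) e1' \<phi> = sat UNIV (IK k2) e2' \<phi>" using bool_comb_sat[OF B] by blast
  then show ?thesis using e1'(2) agree sat_exs by blast
qed

lemma pat_mono: "pat A e1 e2 \<Longrightarrow> B \<subseteq> A \<Longrightarrow> pat B e1 e2" unfolding pat_def by blast
lemma pat_sym: "pat A e1 e2 \<Longrightarrow> pat A e2 e1" unfolding pat_def by blast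

lemma unary_false: "card (set zs) = 1 \<Longrightarrow> \<not> IK k R (map e zs)"
  by (auto simp: IK_def adj_def card_insert_if split: list.split if_splits)

lemma uf1_inv:
  assumes k1: "k1 \<ge> 2" and k2: "k2 \<ge> 2"
  shows "uf1 \<tau> \<phi> \<Longrightarrow> \<forall>e1 e2. pat (fv \<phi>) e1 e2 \<longrightarrow>
     (sat UNIV (IK k1) e1 \<phi> = sat UNIV (IK k2) e2 \<phi>) \<and> (sat UNIV (IK k2) e1 \<phi> = sat UNIV (IK k1) e2 \<phi>)"
proof (induction rule: uf1.induct)
  case (unary_rel R zs)
  then show ?case using unary_false[OF unary_rel(3)] by simp
next
  case (eq x y)
  then show ?case by (simp add: pat_def)
next
  case (neg \<phi>)
  then show ?case by simp
next
  case (conj \<phi> \<psi>)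
  then show ?case by (auto dest: pat_mono[where B="fv \<phi>"] pat_mono[where B="fv \<psi>"])
next
  case (ex_rest x0 xs U V F \<phi>)
  have U1: "\<forall>u\<in>U. fv u \<subseteq> insert x0 (set xs) \<and> (\<forall>e1 e2. pat (fv u) e1 e2 \<longrightarrow> sat UNIV (IK k1) e1 u = sat UNIV (IK k2) e2 u)"
    using ex_rest by auto
  have U2: "\<forall>u\<in>U. fv u \<subseteq> insert x0 (set xs) \<and> (\<forall>e1 e2. pat (fv u) e1 e2 \<longrightarrow> sat UNIV (IK k2) e1 u = sat UNIV (IK k1) e2 u)"
    using ex_rest by auto
  have V: "V \<subseteq> insert x0 (set xs)" using ex_rest by simp
  show ?case
    using block_dir[OF k2 U1 V \<open>uniform_set \<tau> V F\<close> \<open>bool_comb (U \<union> F) \<phi>\<close>] block_dir[OF k1 U2 V \<open>uniform_set \<tau> V F\<close> \<open>bool_comb (U \<union> F) \<phi>\<close>] by blast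
next
  case (ex_all x0 xs U V F \<phi>)
  have U1: "\<forall>u\<in>U. fv u \<subseteq> insert x0 (set (x0#xs)) \<and> (\<forall>e1 e2. pat (fv u) e1 e2 \<longrightarrow> sat UNIV (IK k1) e1 u = sat UNIV (IK k2) e2 u)"
    using ex_all by auto
  have U2: "\<forall>u\<in>U. fv u \<subseteq> insert x0 (set (x0#xs)) \<and> (\<forall>e1 e2. pat (fv u) e1 e2 \<longrightarrow> sat UNIV (IK k2) e1 u = sat UNIV (IK k1) e2 u)"
    using ex_all by auto
  have V: "V \<subseteq> insert x0 (set (x0#xs))" using ex_all by simp
  show ?case
    using block_dir[OF k2 U1 V \<open>uniform_set \<tau> V F\<close> \<open>bool_comb (U \<union> F) \<phi>\<close>] block_dir[OF k1 U2 V \<open>uniform_set \<tau> V F\<close> \<open>bool_comb (U \<union> F) \<phi>\<close>] by blast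
next
  case bot then show ?case by simp
next
  case top then show ?case by simp
qed

definition chi :: fm where
  "chi = Neg (ExGe 1 0 (Neg (ExGe 2 1 (Rel (0,2) [0,1]))))"

lemma sat_chi: "sat UNIV (IK k) e chi = (\<forall>d. \<exists>S. finite S \<and> card S = 2 \<and> (\<forall>s\<in>S. adj k d s))"
  unfolding chi_def sat.simps(5) sat_ex1 by (simp add: IK_def conj_ac)

lemma chi4: "sat UNIV (IK 4) e chi"
  unfolding sat_chi
proof
  fix d :: nat
  define m where "m = 4 * (d div 4)"
  have dm: "d = m + d mod 4" "d mod 4 < 4" unfolding m_def by auto
  show "\<exists>S. finite S \<and> card S = 2 \<and> (\<forall>s\<in>S. adj 4 d s)"
  proof (cases "d mod 4 < 2")
    case True
    have "d \<noteq> m+2" "d \<noteq> m+3" using dm True by linarith+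
    moreover have "(m+2) div 4 = d div 4" "(m+3) div 4 = d div 4" unfolding m_def by simp_all
    ultimately have "adj 4 d (m+2)" "adj 4 d (m+3)" unfolding adj_def by auto
    then show ?thesis by (intro exI[of _ "{m+2, m+3}"]) auto
  next
    case False
    have "d \<noteq> m" "d \<noteq> m+1" using dm False by linarith+
    moreover have "m div 4 = d div 4" "(m+1) div 4 = d div 4" unfolding m_def by simp_all
    ultimately have "adj 4 d m" "adj 4 d (m+1)" unfolding adj_def by auto
    then show ?thesis by (intro exI[of _ "{m, m+1}"]) auto
  qed
qed

lemma chi2: "\<not> sat UNIV (IK 2) e chi"
  unfolding sat_chi
proof
  assume "\<forall>d. \<exists>S. finite S \<and> card S = 2 \<and> (\<forall>s\<in>S. adj 2 d s)"
  then obtain S where S: "finite S" "card S = 2" "\<forall>s\<in>S. adj 2 0 s" by blast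
  have "S \<subseteq> {1}"
  proof
    fix s assume "s \<in> S"
    then have "s div 2 = 0" "s \<noteq> 0" using S(3) by (auto simp: adj_def)
    then show "s \<in> {1}" by auto
  qed
  then have "card S \<le> card {1::nat}" by (intro card_mono) auto
  then show False using S(2) by simp
qed

lemma chi_FOC2: "FOC2_sentence chi"
  by (simp add: FOC2_sentence_def chi_def) auto

definition phi0 :: fm where
  "phi0 = exs [0,1,2] (Rel (0,3) [0,1,2])"

lemma phi0_UF1: "UF1_sentence phi0"
proof -
  have "uf1 {(0,3)} (exs (0#[1,2]) (Rel (0,3) [0,1,2]))"
    by (rule uf1.ex_all[where U="{}" and V="{0,1,2}" and F="{Rel (0,3) [0,1,2]}"])
       (auto simp: uniform_set_def tau_rel_atom_def intro: bool_comb.base)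
  moreover have "fv phi0 = {}" by (auto simp: phi0_def exs_def)
  ultimately show ?thesis unfolding UF1_sentence_def phi0_def by (intro conjI exI[of _ "{(0,3)}"]) auto
qed

theorem mainTheorem4:
  shows "\<not> leq_logic UF1_sentence FOC2_sentence \<and> \<not> leq_logic FOC2_sentence UF1_sentence"
proof
  show "\<not> leq_logic UF1_sentence FOC2_sentence"
  proof
    assume "leq_logic UF1_sentence FOC2_sentence"
    then obtain \<psi> where p: "FOC2_sentence \<psi>" "equiv_fm phi0 \<psi>"
      using phi0_UF1 unfolding leq_logic_def by blast
    define I1 :: "rsym \<Rightarrow> nat list \<Rightarrow> bool" where "I1 = (\<lambda>R l. l = [0,1,2])"
    define I2 :: "rsym \<Rightarrow> nat list \<Rightarrow> bool" where "I2 = (\<lambda>R l. False)"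
    define e :: "nat \<Rightarrow> nat" where "e = (\<lambda>_. 0)"
    have s1: "sat UNIV I1 e phi0" unfolding phi0_def sat_exs
      by (rule exI[of _ "\<lambda>v. if v \<in> {0,1,2} then v else 0"]) (auto simp: I1_def e_def)
    have s2: "\<not> sat UNIV I2 e phi0" unfolding phi0_def sat_exs by (simp add: I2_def)
    have "sat UNIV I1 e \<psi> = sat UNIV I2 e \<psi>"
    proof (rule foc2_inv)
      show "vars \<psi> \<subseteq> {0,1}" using p(1) unfolding FOC2_sentence_def by blast
      fix R and l :: "nat list" assume "card (set l) \<le> 2"
      then show "I1 R l = I2 R l" unfolding I1_def I2_def by auto
    qed
    moreover have "sat UNIV I1 e phi0 = sat UNIV I1 e \<psi>" "sat UNIV I2 e phi0 = sat UNIV I2 e \<psi>"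
      using p(2) unfolding equiv_fm_def by auto
    ultimately show False using s1 s2 by simp
  qed
next
  show "\<not> leq_logic FOC2_sentence UF1_sentence"
  proof
    assume "leq_logic FOC2_sentence UF1_sentence"
    then obtain \<psi> where p: "UF1_sentence \<psi>" "equiv_fm chi \<psi>"
      using chi_FOC2 unfolding leq_logic_def by blast
    obtain \<tau> where u: "uf1 \<tau> \<psi>" and fv: "fv \<psi> = {}" using p(1) unfolding UF1_sentence_def by blast
    define e :: "nat \<Rightarrow> nat" where "e = (\<lambda>_. 0)"
    have "sat UNIV (IK 2) e \<psi> = sat UNIV (IK 4) e \<psi>"
      using uf1_inv[of 2 4, OF _ _ u] fv by (simp add: pat_def)
    moreover have "sat UNIV (IK 2) e chi = sat UNIV (IK 2) e \<psi>" "sat UNIV (IK 4) e chi = sat UNIV (IK 4) e \<psi>"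
      using p(2) unfolding equiv_fm_def by auto
    ultimately show False using chi2 chi4 by simp
  qed
qed

end
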